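(* Let $\mathbb{A}$ be a countably infinite homogeneous oligomorphic structure with oligomorphic approximation, and let $\mathbb{F}$ be a field of characteristic $0$. Then $\mathbb{A}$ has the finite length property over $\mathbb{F}$.
   Context: Homogeneous: every isomorphism between finite substructures extends to an automorphism. Oligomorphic: $\operatorname{Aut}(\mathbb{A})$ has finitely many orbits on each $\mathbb{A}^d$. Oligomorphic approximation: for every $d\ge1$ there is a family $\mathscr{B}$ of finite substructures of $\mathbb{A}$ such that (1) every finite substructure of $\mathbb{A}$ is a substructure of some $\mathbb{B}\in\mathscr{B}$, and (2) there is a finite bound, uniform over $\mathbb{B}\in\mathscr{B}$, on the number of $\operatorname{Aut}(\mathbb{B})$-orbits on $\mathbb{B}^d$. An orbit-finite set over $\mathbb{A}$ is obtained from some $\mathbb{A}^d$ by restricting to an $\operatorname{Aut}(\mathbb{A})$-invariant subset and quotienting by an $\operatorname{Aut}(\mathbb{A})$-invariant equivalence relation. $\operatorname{Lin}_{\mathbb{F}}X$ is the space of finite formal $\mathbb{F}$-linear combinations of elements of $X$ with the induced linear action of $\operatorname{Aut}(\mathbb{A})$; equivariant subspaces are those invariant under this action. The length of $\operatorname{Lin}_{\mathbb{F}}X$ is the supremum of $n$ such that there is a chain $V_0\subsetneq V_1\subsetneq\dots\subsetneq V_n$ of equivariant subspaces. $\mathbb{A}$ has the finite length property over $\mathbb{F}$ if $\operatorname{Lin}_{\mathbb{F}}X$ has finite length for every orbit-finite set $X$ over $\mathbb{A}$. *)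

theory Defs
  imports Main "HOL-Library.Countable_Set"
begin

definition rel_struct :: "'a set \<Rightarrow> ('s \<Rightarrow> nat) \<Rightarrow> ('s \<Rightarrow> 'a list set) \<Rightarrow> bool" where
  "rel_struct A ar Rel \<longleftrightarrow>
     (\<forall>s. \<forall>xs \<in> Rel s. length xs = ar s \<and> set xs \<subseteq> A)"

definition iso_on :: "('s \<Rightarrow> nat) \<Rightarrow> ('s \<Rightarrow> 'a list set) \<Rightarrow> 'a set \<Rightarrow> 'a set \<Rightarrow> ('a \<Rightarrow> 'a) \<Rightarrow> bool" where
  "iso_on ar Rel B C h \<longleftrightarrow> bij_betw h B C \<and>
     (\<forall>s xs. length xs = ar s \<and> set xs \<subseteq> B \<longrightarrow> (xs \<in> Rel s \<longleftrightarrow> map h xs \<in> Rel s))"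

definition aut_on :: "('s \<Rightarrow> nat) \<Rightarrow> ('s \<Rightarrow> 'a list set) \<Rightarrow> 'a set \<Rightarrow> ('a \<Rightarrow> 'a) \<Rightarrow> bool" where
  "aut_on ar Rel B g \<longleftrightarrow> iso_on ar Rel B B g"

definition homogeneous :: "'a set \<Rightarrow> ('s \<Rightarrow> nat) \<Rightarrow> ('s \<Rightarrow> 'a list set) \<Rightarrow> bool" where
  "homogeneous A ar Rel \<longleftrightarrow>
     (\<forall>B C h. finite B \<and> B \<subseteq> A \<and> finite C \<and> C \<subseteq> A \<and> iso_on ar Rel B C h \<longrightarrow>
        (\<exists>g. aut_on ar Rel A g \<and> (\<forall>x\<in>B. g x = h x)))"

definition tuples :: "'a set \<Rightarrow> nat \<Rightarrow> 'a list set" where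
  "tuples B d = {xs. length xs = d \<and> set xs \<subseteq> B}"

definition orbit_rel :: "('s \<Rightarrow> nat) \<Rightarrow> ('s \<Rightarrow> 'a list set) \<Rightarrow> 'a set \<Rightarrow> nat \<Rightarrow> ('a list \<times> 'a list) set" where
  "orbit_rel ar Rel B d =
     {(xs, ys). xs \<in> tuples B d \<and> ys \<in> tuples B d \<and> (\<exists>g. aut_on ar Rel B g \<and> map g xs = ys)}"

definition orbits :: "('s \<Rightarrow> nat) \<Rightarrow> ('s \<Rightarrow> 'a list set) \<Rightarrow> 'a set \<Rightarrow> nat \<Rightarrow> 'a list set set" where
  "orbits ar Rel B d = tuples B d // orbit_rel ar Rel B d"

definition oligomorphic :: "'a set \<Rightarrow> ('s \<Rightarrow> nat) \<Rightarrow> ('s \<Rightarrow> 'a list set) \<Rightarrow> bool" where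
  "oligomorphic A ar Rel \<longleftrightarrow> (\<forall>d. finite (orbits ar Rel A d))"

definition oligomorphic_approximation :: "'a set \<Rightarrow> ('s \<Rightarrow> nat) \<Rightarrow> ('s \<Rightarrow> 'a list set) \<Rightarrow> bool" where
  "oligomorphic_approximation A ar Rel \<longleftrightarrow>
     (\<forall>d\<ge>1. \<exists>\<B>. (\<forall>B\<in>\<B>. finite B \<and> B \<subseteq> A)
        \<and> (\<forall>B0. finite B0 \<and> B0 \<subseteq> A \<longrightarrow> (\<exists>B\<in>\<B>. B0 \<subseteq> B))
        \<and> (\<exists>N::nat. \<forall>B\<in>\<B>. card (orbits ar Rel B d) \<le> N))"

text \<open>X = S // E with S an Aut(A)-invariant subset of A^d and E an
Aut(A)-invariant equivalence relation on S.\<close>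
definition orbit_finite_set :: "'a set \<Rightarrow> ('s \<Rightarrow> nat) \<Rightarrow> ('s \<Rightarrow> 'a list set) \<Rightarrow> nat \<Rightarrow> 'a list set \<Rightarrow> ('a list \<times> 'a list) set \<Rightarrow> bool" where
  "orbit_finite_set A ar Rel d S E \<longleftrightarrow>
     S \<subseteq> tuples A d \<and> equiv S E \<and>
     (\<forall>g. aut_on ar Rel A g \<longrightarrow>
        (\<forall>xs\<in>S. map g xs \<in> S) \<and> (\<forall>(xs, ys)\<in>E. (map g xs, map g ys) \<in> E))"

definition cls_img :: "('a \<Rightarrow> 'a) \<Rightarrow> 'a list set \<Rightarrow> 'a list set" where
  "cls_img g c = map g ` c"

text \<open>Lin_F X: finite formal F-linear combinations of elements of X, represented as
finitely supported functions X \<Rightarrow> F.\<close>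
definition Lin :: "'b set \<Rightarrow> ('b \<Rightarrow> 'f::field) set" where
  "Lin X = {v. finite {x. v x \<noteq> 0} \<and> (\<forall>x. v x \<noteq> 0 \<longrightarrow> x \<in> X)}"

text \<open>Induced linear action of g on Lin_F X: linear extension of x \<mapsto> g x.\<close>
definition lin_act :: "('a \<Rightarrow> 'a) \<Rightarrow> ('a list set \<Rightarrow> 'f::field) \<Rightarrow> ('a list set \<Rightarrow> 'f)" where
  "lin_act g v = (\<lambda>c'. \<Sum>c\<in>{c. v c \<noteq> 0 \<and> cls_img g c = c'}. v c)"

definition lin_subspace :: "'b set \<Rightarrow> ('b \<Rightarrow> 'f::field) set \<Rightarrow> bool" where
  "lin_subspace X V \<longleftrightarrow> V \<subseteq> Lin X \<and> (\<lambda>_. 0) \<in> V \<and>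
     (\<forall>v\<in>V. \<forall>w\<in>V. (\<lambda>x. v x + w x) \<in> V) \<and>
     (\<forall>r. \<forall>v\<in>V. (\<lambda>x. r * v x) \<in> V)"

definition equivariant_subspace :: "'a set \<Rightarrow> ('s \<Rightarrow> nat) \<Rightarrow> ('s \<Rightarrow> 'a list set) \<Rightarrow> 'a list set set \<Rightarrow> ('a list set \<Rightarrow> 'f::field) set \<Rightarrow> bool" where
  "equivariant_subspace A ar Rel X V \<longleftrightarrow> lin_subspace X V \<and>
     (\<forall>g. aut_on ar Rel A g \<longrightarrow> (\<forall>v\<in>V. lin_act g v \<in> V))"

definition finite_length :: "'a set \<Rightarrow> ('s \<Rightarrow> nat) \<Rightarrow> ('s \<Rightarrow> 'a list set) \<Rightarrow> 'a list set set \<Rightarrow> 'f::field itself \<Rightarrow> bool" where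
  "finite_length A ar Rel X (_::'f itself) \<longleftrightarrow>
     (\<exists>N::nat. \<forall>n (V :: nat \<Rightarrow> ('a list set \<Rightarrow> 'f) set).
        (\<forall>i\<le>n. equivariant_subspace A ar Rel X (V i)) \<and> (\<forall>i<n. V i \<subset> V (Suc i)) \<longrightarrow> n \<le> N)"

definition finite_length_property :: "'a set \<Rightarrow> ('s \<Rightarrow> nat) \<Rightarrow> ('s \<Rightarrow> 'a list set) \<Rightarrow> 'f::field itself \<Rightarrow> bool" where
  "finite_length_property A ar Rel F \<longleftrightarrow>
     (\<forall>d S E. orbit_finite_set A ar Rel d S E \<longrightarrow> finite_length A ar Rel (S // E) F)"

end

theory Submission
  imports Defs "HOL-Library.Function_Algebras" "HOL.Vector_Spaces" "HOL-Library.FuncSet"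
begin


definition fscale :: "'f::field \<Rightarrow> ('x \<Rightarrow> 'f) \<Rightarrow> ('x \<Rightarrow> 'f)" where
  "fscale r v = (\<lambda>x. r * v x)"

interpretation fv: vector_space fscale
  by unfold_locales (auto simp: fscale_def plus_fun_def algebra_simps)

interpretation fvp: vector_space_pair fscale fscale ..

lemma sum_fun_apply: "(sum f S) x = (\<Sum>s\<in>S. f s x)"
  by (induction S rule: infinite_finite_induct) (auto simp: plus_fun_def)

lemma fscale_apply: "fscale r v x = r * v x"
  by (simp add: fscale_def)

lemma proj_exists:
  fixes Y :: "'y set" and W :: "('y \<Rightarrow> 'f::field) set"
  assumes Y: "finite Y" and W: "fv.subspace W" and supp: "\<forall>w\<in>W. \<forall>y. y \<notin> Y \<longrightarrow> w y = 0"
  shows "\<exists>Q. (\<forall>u\<in>W. \<forall>x\<in>Y. (\<Sum>z\<in>Y. Q x z * u z) = u x) \<and>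
             (\<forall>z\<in>Y. (\<lambda>x. if x\<in>Y then Q x z else 0) \<in> W)"
proof -
  obtain B where B: "B \<subseteq> W" "fv.independent B" "W \<subseteq> fv.span B"
    by (rule fv.maximal_independent_subset)
  obtain C where C: "B \<subseteq> C" "fv.independent C"
    using fv.maximal_independent_subset_extend[of B UNIV] B by blast
  define f where "f = (\<lambda>x::'y\<Rightarrow>'f. if x \<in> B then x else 0)"
  obtain g where g: "Vector_Spaces.linear fscale fscale g" "\<forall>x\<in>C. g x = f x" "range g = fv.span (f ` C)"
    using fvp.linear_independent_extend_subspace[OF C(2), of f] by blast
  have fC: "f ` C \<subseteq> W" using B(1) fv.subspace_0[OF W] by (auto simp: f_def)
  have rg: "g x \<in> W" for x
    using g(3) fv.span_minimal[OF fC W] by blast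
  have gid: "g u = u" if "u \<in> W" for u
  proof -
    have "g u = id u"
      by (rule fvp.linear_eq_on[OF g(1) fv.linear_id, of u B])
         (use that B C g(2) in \<open>auto simp: f_def\<close>)
    then show ?thesis by simp
  qed
  define \<delta> where "\<delta> = (\<lambda>z::'y. (\<lambda>y. if y = z then (1::'f) else 0))"
  define Q where "Q = (\<lambda>x z. g (\<delta> z) x)"
  show ?thesis
  proof (intro exI[of _ Q] conjI ballI)
    fix u x assume u: "u \<in> W" and x: "x \<in> Y"
    have ueq: "u = (\<Sum>z\<in>Y. fscale (u z) (\<delta> z))"
    proof
      fix y
      show "u y = (\<Sum>z\<in>Y. fscale (u z) (\<delta> z)) y"
        using supp u Y by (cases "y \<in> Y") (auto simp: sum_fun_apply fscale_apply \<delta>_def if_distrib cong: if_cong)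
    qed
    have gu: "g u = (\<Sum>z\<in>Y. fscale (u z) (g (\<delta> z)))"
      by (subst ueq) (simp add: fvp.linear_sum[OF g(1)] fvp.linear_scale[OF g(1)] o_def)
    have "u x = g u x" using gid[OF u] by simp
    also have "\<dots> = (\<Sum>z\<in>Y. u z * g (\<delta> z) x)"
      unfolding gu by (simp add: sum_fun_apply fscale_apply)
    finally have "u x = (\<Sum>z\<in>Y. u z * g (\<delta> z) x)" .
    then show "(\<Sum>z\<in>Y. Q x z * u z) = u x"
      by (simp add: Q_def mult.commute)
  next
    fix z assume "z \<in> Y"
    have "(\<lambda>x. if x\<in>Y then Q x z else 0) = g (\<delta> z)"
      using supp rg[of "\<delta> z"] by (auto simp: Q_def)
    then show "(\<lambda>x. if x\<in>Y then Q x z else 0) \<in> W" using rg by simp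
  qed
qed

lemma reindex_comp:
  fixes Y :: "'y set" and G :: "('y \<Rightarrow> 'y) set"
  assumes G: "finite G"
   and Gbij: "\<forall>\<sigma>\<in>G. bij_betw \<sigma> Y Y"
   and Gext: "\<forall>\<sigma>\<in>G. \<forall>y. y \<notin> Y \<longrightarrow> \<sigma> y = y"
   and Gcomp: "\<forall>\<sigma>\<in>G. \<forall>\<tau>\<in>G. \<tau> \<circ> \<sigma> \<in> G"
   and s: "\<sigma> \<in> G"
  shows "(\<Sum>\<pi>\<in>G. F (\<pi> \<circ> \<sigma>)) = (\<Sum>\<pi>\<in>G. (F \<pi> :: 'f::comm_monoid_add))"
proof -
  define h where "h = (\<lambda>\<pi>::'y\<Rightarrow>'y. \<pi> \<circ> \<sigma>)"
  have inj: "inj_on h G"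
  proof (rule inj_onI)
    fix \<pi> \<pi>' assume p: "\<pi> \<in> G" "\<pi>' \<in> G" "h \<pi> = h \<pi>'"
    show "\<pi> = \<pi>'"
    proof
      fix y
      show "\<pi> y = \<pi>' y"
      proof (cases "y \<in> Y")
        case True
        have "y \<in> \<sigma> ` Y" using Gbij s True by (simp add: bij_betw_def)
        then obtain y0 where "y = \<sigma> y0" by blast
        then show ?thesis using p(3) by (simp add: h_def fun_eq_iff)
      next
        case False then show ?thesis using Gext[rule_format, OF p(1) False] Gext[rule_format, OF p(2) False] by simp
      qed
    qed
  qed
  have sub: "h ` G \<subseteq> G" using Gcomp s by (auto simp: h_def)
  have eq: "h ` G = G"
    by (rule card_subset_eq[OF G sub]) (simp add: card_image[OF inj])
  have "(\<Sum>\<pi>\<in>G. F \<pi>) = (\<Sum>\<pi>\<in>h ` G. F \<pi>)" by (simp add: eq)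
  also have "\<dots> = (\<Sum>\<pi>\<in>G. F (h \<pi>))" by (simp add: sum.reindex[OF inj])
  finally show ?thesis by (simp add: h_def)
qed

lemma avg_proj:
  fixes Y :: "'y set" and G :: "('y \<Rightarrow> 'y) set" and W :: "('y \<Rightarrow> 'f::field) set"
  assumes Y: "finite Y" and G: "finite G"
   and Gbij: "\<forall>\<sigma>\<in>G. bij_betw \<sigma> Y Y"
   and Gext: "\<forall>\<sigma>\<in>G. \<forall>y. y \<notin> Y \<longrightarrow> \<sigma> y = y"
   and Gcomp: "\<forall>\<sigma>\<in>G. \<forall>\<tau>\<in>G. \<tau> \<circ> \<sigma> \<in> G"
   and Ginv: "\<forall>\<sigma>\<in>G. \<exists>\<tau>\<in>G. \<forall>y\<in>Y. \<tau> (\<sigma> y) = y"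
   and W: "fv.subspace W" and supp: "\<forall>w\<in>W. \<forall>y. y \<notin> Y \<longrightarrow> w y = 0"
   and Winv: "\<forall>\<sigma>\<in>G. \<forall>w\<in>W. (\<lambda>y. if y \<in> Y then w (\<sigma> y) else 0) \<in> W"
  shows "\<exists>P. (\<forall>p. p \<notin> Y \<times> Y \<longrightarrow> P p = 0) \<and>
     (\<forall>\<sigma>\<in>G. \<forall>y1\<in>Y. \<forall>y2\<in>Y. P (\<sigma> y1, \<sigma> y2) = P (y1, y2)) \<and>
     (\<forall>z\<in>Y. (\<lambda>x. if x \<in> Y then P (x, z) else 0) \<in> W) \<and>
     (\<forall>u\<in>W. \<forall>x\<in>Y. (\<Sum>z\<in>Y. P (x, z) * u z) = of_nat (card G) * u x)"
proof -
  from proj_exists[OF Y W supp] obtain Q where QQ: "(\<forall>u\<in>W. \<forall>x\<in>Y. (\<Sum>z\<in>Y. Q x z * u z) = u x) \<and>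
    (\<forall>z\<in>Y. (\<lambda>x. if x\<in>Y then Q x z else 0) \<in> W)" ..
  note Q1 = conjunct1[OF QQ] and Q2 = conjunct2[OF QQ]
  define P where "P = (\<lambda>(x, z). if x \<in> Y \<and> z \<in> Y then (\<Sum>\<pi>\<in>G. Q (\<pi> x) (\<pi> z)) else 0)"
  have mapY: "\<pi> y \<in> Y" if "\<pi> \<in> G" "y \<in> Y" for \<pi> y
    using bij_betw_apply[OF Gbij[rule_format, OF that(1)] that(2)] .
  show ?thesis
  proof (intro exI[of _ P] conjI ballI allI impI)
    fix p :: "'y \<times> 'y" assume "p \<notin> Y \<times> Y" then show "P p = 0"
      by (cases p) (auto simp: P_def)
  next
    fix \<sigma> y1 y2 assume s: "\<sigma> \<in> G" and y: "y1 \<in> Y" "y2 \<in> Y"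
    have "(\<Sum>\<pi>\<in>G. Q ((\<pi> \<circ> \<sigma>) y1) ((\<pi> \<circ> \<sigma>) y2)) = (\<Sum>\<pi>\<in>G. Q (\<pi> y1) (\<pi> y2))"
      using reindex_comp[OF G Gbij Gext Gcomp s, of "\<lambda>\<pi>. Q (\<pi> y1) (\<pi> y2)"] by simp
    then show "P (\<sigma> y1, \<sigma> y2) = P (y1, y2)"
      using y s mapY by (simp add: P_def)
  next
    fix z assume z: "z \<in> Y"
    have eq: "(\<lambda>x. if x \<in> Y then P (x, z) else 0) =
          (\<Sum>\<pi>\<in>G. (\<lambda>x. if x \<in> Y then (\<lambda>x. if x\<in>Y then Q x (\<pi> z) else 0) (\<pi> x) else 0))"
    proof
      fix x show "(if x \<in> Y then P (x, z) else 0) =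
          (\<Sum>\<pi>\<in>G. (\<lambda>x. if x \<in> Y then (\<lambda>x. if x\<in>Y then Q x (\<pi> z) else 0) (\<pi> x) else 0)) x"
      proof (cases "x \<in> Y")
        case True then show ?thesis using z mapY by (simp add: P_def sum_fun_apply fscale_apply)
      next
        case False then show ?thesis by (simp add: sum_fun_apply fscale_apply)
      qed
    qed
    show "(\<lambda>x. if x \<in> Y then P (x, z) else 0) \<in> W"
      unfolding eq
    proof (rule fv.subspace_sum[OF W])
      fix \<pi> assume p: "\<pi> \<in> G"
      have qz: "(\<lambda>x. if x\<in>Y then Q x (\<pi> z) else 0) \<in> W" using Q2 mapY[OF p z] by blast
      show "(\<lambda>x. if x \<in> Y then (\<lambda>x. if x\<in>Y then Q x (\<pi> z) else 0) (\<pi> x) else 0) \<in> W"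
        using Winv[rule_format, OF p qz] .
    qed
  next
    fix u x assume u: "u \<in> W" and x: "x \<in> Y"
    have inner: "(\<Sum>z\<in>Y. Q (\<pi> x) (\<pi> z) * u z) = u x" if p: "\<pi> \<in> G" for \<pi>
    proof -
      obtain \<tau> where t: "\<tau> \<in> G" "\<forall>y\<in>Y. \<tau> (\<pi> y) = y" using Ginv p by blast
      define u' where "u' = (\<lambda>y. if y \<in> Y then u (\<tau> y) else 0)"
      have u': "u' \<in> W" using Winv t u by (simp add: u'_def)
      have "(\<Sum>z\<in>Y. Q (\<pi> x) (\<pi> z) * u z) = (\<Sum>z\<in>Y. Q (\<pi> x) (\<pi> z) * u' (\<pi> z))"
        using t mapY[OF p] by (auto simp: u'_def intro!: sum.cong)
      also have "\<dots> = (\<Sum>w\<in>Y. Q (\<pi> x) w * u' w)"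
        using sum.reindex_bij_betw[OF Gbij[rule_format, OF p], of "\<lambda>w. Q (\<pi> x) w * u' w"] by simp
      also have "\<dots> = u' (\<pi> x)" using Q1 u' mapY[OF p x] by blast
      also have "\<dots> = u x" using t mapY[OF p x] x by (simp add: u'_def)
      finally show ?thesis .
    qed
    have "(\<Sum>z\<in>Y. P (x, z) * u z) = (\<Sum>z\<in>Y. \<Sum>\<pi>\<in>G. Q (\<pi> x) (\<pi> z) * u z)"
      using x by (intro sum.cong) (simp_all add: P_def sum_distrib_right)
    also have "\<dots> = (\<Sum>\<pi>\<in>G. \<Sum>z\<in>Y. Q (\<pi> x) (\<pi> z) * u z)" by (rule sum.swap)
    also have "\<dots> = (\<Sum>\<pi>\<in>G. u x)" using inner by simp
    also have "\<dots> = of_nat (card G) * u x" by simp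
    finally show "(\<Sum>z\<in>Y. P (x, z) * u z) = of_nat (card G) * u x" .
  qed
qed

lemma vs_fscale: "vector_space (fscale :: 'f::field \<Rightarrow> ('x \<Rightarrow> 'f) \<Rightarrow> ('x \<Rightarrow> 'f))"
  by unfold_locales (auto simp: fscale_def plus_fun_def algebra_simps)

lemma core_chain:
  fixes Y :: "'y set" and G :: "('y \<Rightarrow> 'y) set" and Z :: "('y \<times> 'y) set"
    and W :: "nat \<Rightarrow> ('y \<Rightarrow> 'f::field_char_0) set" and N n :: nat
  assumes Y: "finite Y" and G: "finite G" and Gne: "G \<noteq> {}"
   and Gbij: "\<forall>\<sigma>\<in>G. bij_betw \<sigma> Y Y"
   and Gext: "\<forall>\<sigma>\<in>G. \<forall>y. y \<notin> Y \<longrightarrow> \<sigma> y = y"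
   and Gcomp: "\<forall>\<sigma>\<in>G. \<forall>\<tau>\<in>G. \<tau> \<circ> \<sigma> \<in> G"
   and Ginv: "\<forall>\<sigma>\<in>G. \<exists>\<tau>\<in>G. \<forall>y\<in>Y. \<tau> (\<sigma> y) = y"
   and Zsub: "Z \<subseteq> Y \<times> Y" and ZN: "card Z \<le> N"
   and Zcov: "\<forall>y1\<in>Y. \<forall>y2\<in>Y. \<exists>\<sigma>\<in>G. (\<sigma> y1, \<sigma> y2) \<in> Z"
   and Wsp: "\<forall>i\<le>n. fv.subspace (W i)"
   and Wsupp: "\<forall>i\<le>n. \<forall>w\<in>W i. \<forall>y. y \<notin> Y \<longrightarrow> w y = 0"
   and Winv: "\<forall>i\<le>n. \<forall>\<sigma>\<in>G. \<forall>w\<in>W i. (\<lambda>y. if y \<in> Y then w (\<sigma> y) else 0) \<in> W i"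
   and chain: "\<forall>i<n. W i \<subset> W (Suc i)"
  shows "n \<le> N"
proof -
  have Z: "finite Z" using Zsub Y finite_subset by blast
  have Wmono: "W i \<subseteq> W j" if "i \<le> j" "j \<le> n" for i j
    using that
  proof (induction j)
    case 0 then show ?case by simp
  next
    case (Suc j)
    show ?case
    proof (cases "i = Suc j")
      case True then show ?thesis by simp
    next
      case False
      then have "W i \<subseteq> W j" using Suc by simp
      moreover have "W j \<subset> W (Suc j)" using chain Suc.prems by simp
      ultimately show ?thesis by blast
    qed
  qed
  define U where "U = (\<lambda>i. {M :: 'y \<times> 'y \<Rightarrow> 'f. (\<forall>p. p \<notin> Y \<times> Y \<longrightarrow> M p = 0) \<and>
     (\<forall>\<sigma>\<in>G. \<forall>y1\<in>Y. \<forall>y2\<in>Y. M (\<sigma> y1, \<sigma> y2) = M (y1, y2)) \<and>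
     (\<forall>z\<in>Y. (\<lambda>x. if x \<in> Y then M (x, z) else 0) \<in> W i)})"
  have Umono: "U i \<subseteq> U j" if "i \<le> j" "j \<le> n" for i j
    using Wmono[OF that] by (auto simp: U_def)
  have Usp: "fv.subspace (U i)" if "i \<le> n" for i
  proof -
    have sp: "fv.subspace (W i)" using Wsp that by blast
    show ?thesis
      unfolding fv.subspace_def
    proof (intro conjI ballI allI)
      have "(\<lambda>x. if x \<in> Y then (0::'y \<times> 'y \<Rightarrow> 'f) (x, z) else 0) = 0" for z
        by (simp add: fun_eq_iff)
      then show "0 \<in> U i" using fv.subspace_0[OF sp] by (simp add: U_def)
    next
      fix M1 M2 assume M: "M1 \<in> U i" "M2 \<in> U i"
      have "(\<lambda>x. if x \<in> Y then (M1 + M2) (x, z) else 0) =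
         (\<lambda>x. if x \<in> Y then M1 (x, z) else 0) + (\<lambda>x. if x \<in> Y then M2 (x, z) else 0)" for z
        by (simp add: fun_eq_iff)
      then show "M1 + M2 \<in> U i" using M fv.subspace_add[OF sp] by (simp add: U_def)
    next
      fix c and M assume M: "M \<in> U i"
      have "(\<lambda>x. if x \<in> Y then (fscale c M) (x, z) else 0) =
         fscale c (\<lambda>x. if x \<in> Y then M (x, z) else 0)" for z
        by (simp add: fun_eq_iff fscale_apply)
      then show "fscale c M \<in> U i" using M fv.subspace_scale[OF sp] by (simp add: U_def) (simp add: fscale_apply)
    qed
  qed
  define L where "L = (\<lambda>M :: 'y \<times> 'y \<Rightarrow> 'f. (\<lambda>p. if p \<in> Z then M p else 0))"
  have linL: "Vector_Spaces.linear fscale fscale L"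
    unfolding Vector_Spaces.linear_iff using vs_fscale by (auto simp: L_def fun_eq_iff fscale_apply)
  have Linj: "M1 = M2" if "M1 \<in> U n" "M2 \<in> U n" "L M1 = L M2" for M1 M2
  proof
    fix p :: "'y \<times> 'y"
    show "M1 p = M2 p"
    proof (cases "p \<in> Y \<times> Y")
      case True
      then obtain y1 y2 where p: "p = (y1, y2)" "y1 \<in> Y" "y2 \<in> Y" by auto
      then obtain \<sigma> where s: "\<sigma> \<in> G" "(\<sigma> y1, \<sigma> y2) \<in> Z" using Zcov by blast
      have "M1 (\<sigma> y1, \<sigma> y2) = M2 (\<sigma> y1, \<sigma> y2)"
        using that(3) s(2) by (auto simp: L_def fun_eq_iff split: if_splits)
      moreover have "M1 (\<sigma> y1, \<sigma> y2) = M1 (y1, y2)" "M2 (\<sigma> y1, \<sigma> y2) = M2 (y1, y2)"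
        using that(1,2) s(1) p by (auto simp: U_def)
      ultimately show ?thesis using p by simp
    next
      case False
      have "M1 p = 0" "M2 p = 0" using that(1,2) False unfolding U_def by blast+
      then show ?thesis by simp
    qed
  qed
  have strict: "\<exists>M \<in> U (Suc i). M \<notin> U i" if i: "i < n" for i
  proof -
    have i1: "Suc i \<le> n" using i by simp
    obtain v where v: "v \<in> W (Suc i)" "v \<notin> W i" using chain i by blast
    have spS: "fv.subspace (W (Suc i))" using Wsp i1 by blast
    have spi: "fv.subspace (W i)" using Wsp i by simp
    have suppS: "\<forall>w\<in>W (Suc i). \<forall>y. y \<notin> Y \<longrightarrow> w y = 0" using Wsupp i1 by blast
    have invS: "\<forall>\<sigma>\<in>G. \<forall>w\<in>W (Suc i). (\<lambda>y. if y \<in> Y then w (\<sigma> y) else 0) \<in> W (Suc i)"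
      using Winv i1 by blast
    from avg_proj[OF Y G Gbij Gext Gcomp Ginv spS suppS invS]
    obtain P where P1: "\<forall>p. p \<notin> Y \<times> Y \<longrightarrow> P p = 0"
      and P2: "\<forall>\<sigma>\<in>G. \<forall>y1\<in>Y. \<forall>y2\<in>Y. P (\<sigma> y1, \<sigma> y2) = P (y1, y2)"
      and P3: "\<forall>z\<in>Y. (\<lambda>x. if x \<in> Y then P (x, z) else 0) \<in> W (Suc i)"
      and P4: "\<forall>u\<in>W (Suc i). \<forall>x\<in>Y. (\<Sum>z\<in>Y. P (x, z) * u z) = of_nat (card G) * u x"
      by blast
    have PU: "P \<in> U (Suc i)" using P1 P2 P3 by (simp add: U_def)
    have "P \<notin> U i"
    proof
      assume "P \<in> U i"
      then have cols: "\<forall>z\<in>Y. (\<lambda>x. if x \<in> Y then P (x, z) else 0) \<in> W i" by (simp add: U_def)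
      define s where "s = (\<Sum>z\<in>Y. fscale (v z) (\<lambda>x. if x \<in> Y then P (x, z) else 0))"
      have sW: "s \<in> W i" unfolding s_def
        by (rule fv.subspace_sum[OF spi]) (use cols fv.subspace_scale[OF spi] in blast)
      have cG: "(of_nat (card G) :: 'f) \<noteq> 0" using G Gne by simp
      have "s = fscale (of_nat (card G)) v"
      proof
        fix y
        show "s y = fscale (of_nat (card G)) v y"
        proof (cases "y \<in> Y")
          case True
          have "s y = (\<Sum>z\<in>Y. P (y, z) * v z)"
            using True by (simp add: s_def sum_fun_apply fscale_apply mult.commute)
          also have "\<dots> = of_nat (card G) * v y" using P4 v(1) True by blast
          finally show ?thesis by (simp add: fscale_apply)
        next
          case False
          then show ?thesis using suppS v(1) by (simp add: s_def sum_fun_apply fscale_apply)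
        qed
      qed
      then have "fscale (inverse (of_nat (card G))) s = v"
        using cG by (simp add: fun_eq_iff fscale_def)
      then have "v \<in> W i" using fv.subspace_scale[OF spi sW] by metis
      then show False using v(2) by simp
    qed
    then show ?thesis using PU by blast
  qed
  have ind: "\<exists>S. S \<subseteq> L ` U k \<and> fv.independent S \<and> finite S \<and> card S = k" if "k \<le> n" for k
    using that
  proof (induction k)
    case 0 then show ?case by (intro exI[of _ "{}"] conjI fv.independent_empty) simp_all
  next
    case (Suc k)
    have "k \<le> n" using Suc.prems by simp
    then obtain S where S: "S \<subseteq> L ` U k" "fv.independent S" "finite S" "card S = k" using Suc.IH by blast
    have kn: "k < n" using Suc.prems by simp
    obtain M where M: "M \<in> U (Suc k)" "M \<notin> U k" using strict[OF kn] by blast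
    have Mn: "M \<in> U n" using M(1) Umono[of "Suc k" n] Suc.prems by blast
    have subLU: "fv.subspace (L ` U k)"
      using fvp.linear_subspace_image[OF linL Usp] Suc.prems by simp
    have spanS: "fv.span S \<subseteq> L ` U k" using fv.span_minimal[OF S(1) subLU] .
    have notin: "L M \<notin> L ` U k"
    proof
      assume "L M \<in> L ` U k"
      then obtain M' where M': "M' \<in> U k" "L M = L M'" by auto
      have "M' \<in> U n" using M'(1) Umono[of k n] kn by auto
      then have "M = M'" using Linj Mn M'(2) by blast
      then show False using M M' by simp
    qed
    have nspan: "L M \<notin> fv.span S" using notin spanS by blast
    have nS: "L M \<notin> S" using nspan fv.span_superset by blast
    show ?case
    proof (intro exI[of _ "insert (L M) S"] conjI)
      show "insert (L M) S \<subseteq> L ` U (Suc k)" using S(1) M(1) Umono[of k "Suc k"] Suc.prems by auto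
      show "fv.independent (insert (L M) S)" using fv.independent_insertI[OF nspan S(2)] .
      show "finite (insert (L M) S)" using S(3) by simp
      show "card (insert (L M) S) = Suc k" using S(3,4) nS by simp
    qed
  qed
  obtain S where S: "S \<subseteq> L ` U n" "fv.independent S" "finite S" "card S = n"
    using ind[of n] by auto
  define \<delta> where "\<delta> = (\<lambda>z::'y \<times> 'y. (\<lambda>p. if p = z then (1::'f) else 0))"
  have inspan: "L M \<in> fv.span (\<delta> ` Z)" for M
  proof -
    have "L M = (\<Sum>z\<in>Z. fscale (M z) (\<delta> z))"
    proof
      fix p show "L M p = (\<Sum>z\<in>Z. fscale (M z) (\<delta> z)) p"
        using Z by (cases "p \<in> Z") (auto simp: L_def \<delta>_def sum_fun_apply fscale_apply if_distrib cong: if_cong)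
    qed
    also have "\<dots> \<in> fv.span (\<delta> ` Z)"
      by (intro fv.span_sum fv.span_scale fv.span_base) auto
    finally show ?thesis .
  qed
  have "S \<subseteq> fv.span (\<delta> ` Z)" using S(1) inspan by auto
  then have "card S \<le> card (\<delta> ` Z)" using fv.independent_span_bound[OF _ S(2)] Z by blast
  also have "\<dots> \<le> card Z" by (rule card_image_le[OF Z])
  finally show ?thesis using S(4) ZN by simp
qed



lemma aut_id: "aut_on ar Rel A id"
  by (simp add: aut_on_def iso_on_def)

lemma aut_comp:
  assumes "aut_on ar Rel A g" "aut_on ar Rel A h"
  shows "aut_on ar Rel A (h \<circ> g)"
proof -
  have bg: "bij_betw g A A" and bh: "bij_betw h A A" using assms by (auto simp: aut_on_def iso_on_def)
  have "bij_betw (h \<circ> g) A A" using bij_betw_trans[OF bg bh] .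
  moreover have "xs \<in> Rel s \<longleftrightarrow> map (h \<circ> g) xs \<in> Rel s" if "length xs = ar s" "set xs \<subseteq> A" for s xs
  proof -
    have s: "set (map g xs) \<subseteq> A" using that bg by (auto simp: bij_betw_def)
    have l: "length (map g xs) = ar s" using that by simp
    have 1: "xs \<in> Rel s \<longleftrightarrow> map g xs \<in> Rel s" using assms(1) that by (auto simp: aut_on_def iso_on_def)
    have 2: "map g xs \<in> Rel s \<longleftrightarrow> map h (map g xs) \<in> Rel s"
      using assms(2) s l unfolding aut_on_def iso_on_def by blast
    show ?thesis using 1 2 by simp
  qed
  ultimately show ?thesis by (auto simp: aut_on_def iso_on_def)
qed

lemma aut_inv:
  assumes "aut_on ar Rel A g"
  shows "aut_on ar Rel A (inv_into A g)"
proof -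
  have bg: "bij_betw g A A" using assms by (auto simp: aut_on_def iso_on_def)
  have bh: "bij_betw (inv_into A g) A A" using bij_betw_inv_into[OF bg] .
  moreover have "xs \<in> Rel s \<longleftrightarrow> map (inv_into A g) xs \<in> Rel s" if "length xs = ar s" "set xs \<subseteq> A" for s xs
  proof -
    have s: "set (map (inv_into A g) xs) \<subseteq> A" using that bh by (auto simp: bij_betw_def)
    have "map g (map (inv_into A g) xs) = xs"
      using that bg by (auto simp: bij_betw_def f_inv_into_f intro!: map_idI)
    then show ?thesis using assms that s by (auto simp: aut_on_def iso_on_def)
  qed
  ultimately show ?thesis by (auto simp: aut_on_def iso_on_def)
qed

lemma cls_img_comp: "cls_img h (cls_img g c) = cls_img (h \<circ> g) c"
  by (simp add: cls_img_def image_image)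

lemma cls_img_class:
  assumes of: "orbit_finite_set A ar Rel d S E" and g: "aut_on ar Rel A g" and ys: "ys \<in> S"
  shows "cls_img g (E `` {ys}) = E `` {map g ys}"
proof -
  have bg: "bij_betw g A A" using g by (auto simp: aut_on_def iso_on_def)
  define h where "h = inv_into A g"
  have h: "aut_on ar Rel A h" using aut_inv[OF g] by (simp add: h_def)
  have Einv: "(map f xs, map f zs) \<in> E" if "aut_on ar Rel A f" "(xs, zs) \<in> E" for f xs zs
    using of that unfolding orbit_finite_set_def by blast
  have Ssub: "S \<subseteq> tuples A d" and eq: "equiv S E" using of by (auto simp: orbit_finite_set_def)
  have inA: "set xs \<subseteq> A" if "xs \<in> S" for xs using Ssub that by (auto simp: tuples_def)
  have ES: "zs \<in> S" if "(xs, zs) \<in> E" for xs zs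
    using eq that by (auto simp: equiv_def refl_on_def)
  show ?thesis
  proof
    show "cls_img g (E `` {ys}) \<subseteq> E `` {map g ys}"
      using Einv[OF g] by (auto simp: cls_img_def)
  next
    show "E `` {map g ys} \<subseteq> cls_img g (E `` {ys})"
    proof
      fix ws assume "ws \<in> E `` {map g ys}"
      then have ws: "(map g ys, ws) \<in> E" by simp
      have wsA: "set ws \<subseteq> A" using inA[OF ES[OF ws]] .
      have "(map h (map g ys), map h ws) \<in> E" using Einv[OF h ws] .
      moreover have "map h (map g ys) = ys"
        using inA[OF ys] bg by (auto simp: h_def bij_betw_def inv_into_f_f intro!: map_idI)
      ultimately have "map h ws \<in> E `` {ys}" by simp
      moreover have "map g (map h ws) = ws"
        using wsA bg by (auto simp: h_def bij_betw_def f_inv_into_f intro!: map_idI)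
      ultimately show "ws \<in> cls_img g (E `` {ys})" unfolding cls_img_def by (metis image_eqI)
    qed
  qed
qed

lemma finite_tuples: "finite B \<Longrightarrow> finite (tuples B d)"
  unfolding tuples_def using finite_lists_length_eq[of B d] by (simp add: conj_commute)

lemma finite_extfuns:
  assumes "finite Y"
  shows "finite {\<sigma>::'y \<Rightarrow> 'y. (\<forall>c. c \<notin> Y \<longrightarrow> \<sigma> c = c) \<and> \<sigma> ` Y \<subseteq> Y}"
proof -
  let ?F = "{\<sigma>::'y \<Rightarrow> 'y. (\<forall>c. c \<notin> Y \<longrightarrow> \<sigma> c = c) \<and> \<sigma> ` Y \<subseteq> Y}"
  have inj: "inj_on (\<lambda>\<sigma>. restrict \<sigma> Y) ?F"
  proof (rule inj_onI)
    fix \<sigma> \<tau> assume a: "\<sigma> \<in> ?F" "\<tau> \<in> ?F" "restrict \<sigma> Y = restrict \<tau> Y"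
    show "\<sigma> = \<tau>"
    proof
      fix c show "\<sigma> c = \<tau> c"
      proof (cases "c \<in> Y")
        case True
        have "restrict \<sigma> Y c = restrict \<tau> Y c" using a(3) by simp
        then show ?thesis using True by simp
      next
        case False then show ?thesis using a(1,2) by simp
      qed
    qed
  qed
  have sub: "(\<lambda>\<sigma>. restrict \<sigma> Y) ` ?F \<subseteq> Y \<rightarrow>\<^sub>E Y" by auto
  have fin: "finite (Y \<rightarrow>\<^sub>E Y)" using assms by (simp add: finite_PiE)
  have "finite ((\<lambda>\<sigma>. restrict \<sigma> Y) ` ?F)" using finite_subset[OF sub fin] .
  then show ?thesis using finite_imageD[OF _ inj] by blast
qed

lemma inv_stab:
  assumes g: "aut_on ar Rel A g" and gB: "g ` B = B" and BA: "B \<subseteq> A"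
  shows "inv_into A g ` B = B"
proof -
  have bg: "bij_betw g A A" using g by (auto simp: aut_on_def iso_on_def)
  have ia: "inv_into A g (g x) = x" if "x \<in> A" for x
    using bg that by (simp add: bij_betw_def inv_into_f_f)
  show ?thesis
  proof
    show "inv_into A g ` B \<subseteq> B"
    proof
      fix y assume "y \<in> inv_into A g ` B"
      then obtain b where b: "b \<in> B" "y = inv_into A g b" by auto
      then obtain b' where "b' \<in> B" "b = g b'" using gB by auto
      then show "y \<in> B" using b ia BA by auto
    qed
  next
    show "B \<subseteq> inv_into A g ` B"
    proof
      fix b assume b: "b \<in> B"
      have "g b \<in> B" using gB b by auto
      moreover have "inv_into A g (g b) = b" using ia b BA by auto
      ultimately show "b \<in> inv_into A g ` B" by (metis image_eqI)
    qed
  qed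
qed

lemma main_bound:
  fixes V :: "nat \<Rightarrow> ('a list set \<Rightarrow> 'f::field_char_0) set"
    and v :: "nat \<Rightarrow> ('a list set \<Rightarrow> 'f)"
  assumes hom: "homogeneous A ar Rel" and of: "orbit_finite_set A ar Rel d S E"
    and Bfin: "finite B" and BA: "B \<subseteq> A" and a0: "a0 \<in> B"
    and orbN: "card (orbits ar Rel B (Suc (2 * d))) \<le> N"
    and Veq: "\<forall>i\<le>n. equivariant_subspace A ar Rel (S // E) (V i)"
    and vwit: "\<forall>i<n. v i \<in> V (Suc i) \<and> v i \<notin> V i"
    and vsupp: "\<forall>i<n. \<forall>c. v i c \<noteq> 0 \<longrightarrow> (\<exists>ys\<in>S. set ys \<subseteq> B \<and> c = E `` {ys})"
    and chain: "\<forall>i<n. V i \<subset> V (Suc i)"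
  shows "n \<le> N"
proof -
  have Ssub: "S \<subseteq> tuples A d" and eq: "equiv S E" using of by (auto simp: orbit_finite_set_def)
  have Sinv: "map g ys \<in> S" if "aut_on ar Rel A g" "ys \<in> S" for g ys
    using of that unfolding orbit_finite_set_def by blast
  define Y where "Y = (\<lambda>ys. E `` {ys}) ` (S \<inter> tuples B d)"
  have Yfin: "finite Y" unfolding Y_def using finite_tuples[OF Bfin] by simp
  have YI: "E `` {ys} \<in> Y" if "ys \<in> S" "set ys \<subseteq> B" for ys
  proof -
    have "length ys = d" using that Ssub by (auto simp: tuples_def)
    then show ?thesis using that unfolding Y_def tuples_def by auto
  qed
  have YE: "\<exists>ys. ys \<in> S \<and> set ys \<subseteq> B \<and> length ys = d \<and> c = E `` {ys}" if "c \<in> Y" for c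
    using that unfolding Y_def tuples_def by auto
  define sig where "sig = (\<lambda>g c. if c \<in> Y then cls_img g c else c)"
  define G where "G = {\<sigma>. \<exists>g. aut_on ar Rel A g \<and> g ` B = B \<and> \<sigma> = sig g}"
  have setB: "set (map g ys) \<subseteq> B" if "g ` B = B" "set ys \<subseteq> B" for g ys
    using that by auto
  have mapY: "cls_img g c \<in> Y" if g: "aut_on ar Rel A g" "g ` B = B" and c: "c \<in> Y" for g c
  proof -
    obtain ys where ys: "ys \<in> S" "set ys \<subseteq> B" "c = E `` {ys}" using YE[OF c] by blast
    have "cls_img g c = E `` {map g ys}" using cls_img_class[OF of g(1) ys(1)] ys(3) by simp
    then show ?thesis using YI[OF Sinv[OF g(1) ys(1)] setB[OF g(2) ys(2)]] by simp
  qed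
  have invY: "cls_img (inv_into A g) (cls_img g c) = c" "cls_img g (cls_img (inv_into A g) c) = c"
    if g: "aut_on ar Rel A g" and c: "c \<in> Y" for g c
  proof -
    have bg: "bij_betw g A A" using g by (auto simp: aut_on_def iso_on_def)
    have h: "aut_on ar Rel A (inv_into A g)" using aut_inv[OF g] .
    obtain ys where ys: "ys \<in> S" "set ys \<subseteq> B" "c = E `` {ys}" using YE[OF c] by blast
    have ysA: "set ys \<subseteq> A" using ys(2) BA by auto
    have "cls_img (inv_into A g) (cls_img g c) = E `` {map (inv_into A g) (map g ys)}"
      using cls_img_class[OF of g ys(1)] cls_img_class[OF of h Sinv[OF g ys(1)]] ys(3) by simp
    also have "map (inv_into A g) (map g ys) = ys"
      using ysA bg by (auto simp: bij_betw_def inv_into_f_f intro!: map_idI)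
    finally show "cls_img (inv_into A g) (cls_img g c) = c" using ys(3) by simp
    have "cls_img g (cls_img (inv_into A g) c) = E `` {map g (map (inv_into A g) ys)}"
      using cls_img_class[OF of h ys(1)] cls_img_class[OF of g Sinv[OF h ys(1)]] ys(3) by simp
    also have "map g (map (inv_into A g) ys) = ys"
      using ysA bg by (auto simp: bij_betw_def f_inv_into_f intro!: map_idI)
    finally show "cls_img g (cls_img (inv_into A g) c) = c" using ys(3) by simp
  qed
  have Gext: "\<forall>\<sigma>\<in>G. \<forall>y. y \<notin> Y \<longrightarrow> \<sigma> y = y" by (auto simp: G_def sig_def)
  have GmapY: "\<forall>\<sigma>\<in>G. \<sigma> ` Y \<subseteq> Y" using mapY by (auto simp: G_def sig_def)
  have Ginv: "\<forall>\<sigma>\<in>G. \<exists>\<tau>\<in>G. \<forall>y\<in>Y. \<tau> (\<sigma> y) = y"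
  proof
    fix \<sigma> assume "\<sigma> \<in> G"
    then obtain g where g: "aut_on ar Rel A g" "g ` B = B" "\<sigma> = sig g" by (auto simp: G_def)
    have "sig (inv_into A g) \<in> G"
      using aut_inv[OF g(1)] inv_stab[OF g(1) g(2) BA] by (auto simp: G_def)
    moreover have "\<forall>y\<in>Y. sig (inv_into A g) (\<sigma> y) = y"
      using g mapY invY by (simp add: sig_def)
    ultimately show "\<exists>\<tau>\<in>G. \<forall>y\<in>Y. \<tau> (\<sigma> y) = y" by blast
  qed
  have Gbij: "\<forall>\<sigma>\<in>G. bij_betw \<sigma> Y Y"
  proof
    fix \<sigma> assume s: "\<sigma> \<in> G"
    obtain \<tau> where t: "\<forall>y\<in>Y. \<tau> (\<sigma> y) = y" using Ginv s by blast
    have inj: "inj_on \<sigma> Y" using t by (metis inj_onI)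
    have sub: "\<sigma> ` Y \<subseteq> Y" using GmapY s by blast
    have "\<sigma> ` Y = Y" by (rule card_subset_eq[OF Yfin sub]) (simp add: card_image[OF inj])
    then show "bij_betw \<sigma> Y Y" using inj by (simp add: bij_betw_def)
  qed
  have Gcomp: "\<forall>\<sigma>\<in>G. \<forall>\<tau>\<in>G. \<tau> \<circ> \<sigma> \<in> G"
  proof (intro ballI)
    fix \<sigma> \<tau> assume "\<sigma> \<in> G" "\<tau> \<in> G"
    then obtain g h where g: "aut_on ar Rel A g" "g ` B = B" "\<sigma> = sig g"
      and h: "aut_on ar Rel A h" "h ` B = B" "\<tau> = sig h" by (auto simp: G_def)
    have "\<tau> \<circ> \<sigma> = sig (h \<circ> g)"
    proof
      fix c show "(\<tau> \<circ> \<sigma>) c = sig (h \<circ> g) c"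
        using g h mapY[OF g(1) g(2)] by (auto simp: sig_def cls_img_comp)
    qed
    moreover have "(h \<circ> g) ` B = B" by (simp only: image_comp[symmetric] g(2) h(2))
    ultimately show "\<tau> \<circ> \<sigma> \<in> G" using aut_comp[OF g(1) h(1)] unfolding G_def by blast
  qed
  have Gfin: "finite G"
  proof (rule finite_subset[OF _ finite_extfuns[OF Yfin]])
    show "G \<subseteq> {\<sigma>. (\<forall>c. c \<notin> Y \<longrightarrow> \<sigma> c = c) \<and> \<sigma> ` Y \<subseteq> Y}"
    proof
      fix \<sigma> assume s: "\<sigma> \<in> G"
      show "\<sigma> \<in> {\<sigma>. (\<forall>c. c \<notin> Y \<longrightarrow> \<sigma> c = c) \<and> \<sigma> ` Y \<subseteq> Y}"
        using Gext[rule_format, OF s] GmapY[rule_format, OF s] by simp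
    qed
  qed
  have Gne: "G \<noteq> {}"
  proof -
    have "sig id \<in> G" using aut_id[of ar Rel A] by (auto simp: G_def)
    then show ?thesis by blast
  qed
  define D where "D = Suc (2 * d)"
  define rep where "rep = (\<lambda>Ob::'a list set. SOME r. r \<in> Ob)"
  define pr where "pr = (\<lambda>r::'a list. (E `` {take d r}, E `` {take d (drop d r)}))"
  define Z where "Z = ((pr \<circ> rep) ` orbits ar Rel B D) \<inter> (Y \<times> Y)"
  have orbfin: "finite (orbits ar Rel B D)"
    unfolding orbits_def quotient_def using finite_tuples[OF Bfin, of D] by simp
  have Zsub: "Z \<subseteq> Y \<times> Y" by (simp add: Z_def)
  have ZN: "card Z \<le> N"
  proof -
    have "card Z \<le> card ((pr \<circ> rep) ` orbits ar Rel B D)"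
      by (rule card_mono) (use orbfin in \<open>auto simp: Z_def\<close>)
    also have "\<dots> \<le> card (orbits ar Rel B D)" by (rule card_image_le[OF orbfin])
    finally show ?thesis using orbN by (simp add: D_def)
  qed
  have Zcov: "\<forall>y1\<in>Y. \<forall>y2\<in>Y. \<exists>\<sigma>\<in>G. (\<sigma> y1, \<sigma> y2) \<in> Z"
  proof (intro ballI)
    fix y1 y2 assume y1: "y1 \<in> Y" and y2: "y2 \<in> Y"
    obtain ys1 where ys1: "ys1 \<in> S" "set ys1 \<subseteq> B" "length ys1 = d" "y1 = E `` {ys1}" using YE[OF y1] by blast
    obtain ys2 where ys2: "ys2 \<in> S" "set ys2 \<subseteq> B" "length ys2 = d" "y2 = E `` {ys2}" using YE[OF y2] by blast
    define x where "x = ys1 @ ys2 @ [a0]"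
    have xt: "x \<in> tuples B D" using ys1 ys2 a0 by (auto simp: x_def tuples_def D_def)
    define Ob where "Ob = orbit_rel ar Rel B D `` {x}"
    have Oin: "Ob \<in> orbits ar Rel B D" unfolding Ob_def orbits_def by (rule quotientI[OF xt])
    have idB: "aut_on ar Rel B id" by (rule aut_id)
    have "x \<in> Ob" using xt idB unfolding Ob_def orbit_rel_def by auto
    then have rO: "rep Ob \<in> Ob" unfolding rep_def by (rule someI)
    then obtain g where g: "aut_on ar Rel B g" "map g x = rep Ob"
      unfolding Ob_def orbit_rel_def by auto
    have isog: "iso_on ar Rel B B g" using g(1) by (simp add: aut_on_def)
    obtain g' where g': "aut_on ar Rel A g'" "\<forall>b\<in>B. g' b = g b"
      using hom isog Bfin BA unfolding homogeneous_def by blast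
    have gB: "g ` B = B" using isog by (auto simp: iso_on_def bij_betw_def)
    have g'B: "g' ` B = B" using gB g'(2) by (metis image_cong)
    have sG: "sig g' \<in> G" unfolding G_def using g'(1) g'B by blast
    have m1: "map g' ys1 = map g ys1" using ys1(2) g'(2) by (auto intro!: map_cong)
    have m2: "map g' ys2 = map g ys2" using ys2(2) g'(2) by (auto intro!: map_cong)
    have rOe: "rep Ob = map g ys1 @ map g ys2 @ [g a0]" using g(2) by (simp add: x_def)
    have t1: "take d (rep Ob) = map g ys1" unfolding rOe using ys1(3) by simp
    have t2: "take d (drop d (rep Ob)) = map g ys2" unfolding rOe using ys1(3) ys2(3) by simp
    have s1: "sig g' y1 = E `` {map g ys1}"
      using y1 cls_img_class[OF of g'(1) ys1(1)] ys1(4) m1 by (simp add: sig_def)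
    have s2: "sig g' y2 = E `` {map g ys2}"
      using y2 cls_img_class[OF of g'(1) ys2(1)] ys2(4) m2 by (simp add: sig_def)
    have inY: "sig g' y1 \<in> Y" "sig g' y2 \<in> Y" using mapY[OF g'(1) g'B] y1 y2 by (auto simp: sig_def)
    have "(sig g' y1, sig g' y2) = (pr \<circ> rep) Ob" using s1 s2 t1 t2 by (simp add: pr_def)
    then have "(sig g' y1, sig g' y2) \<in> Z" using Oin inY unfolding Z_def by (metis IntI image_eqI mem_Sigma_iff)
    then show "\<exists>\<sigma>\<in>G. (\<sigma> y1, \<sigma> y2) \<in> Z" using sG by blast
  qed
  define W where "W = (\<lambda>i. V i \<inter> {w. \<forall>c. c \<notin> Y \<longrightarrow> w c = 0})"
  have Wsupp: "\<forall>i\<le>n. \<forall>w\<in>W i. \<forall>y. y \<notin> Y \<longrightarrow> w y = 0" by (simp add: W_def)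
  have Wsp: "\<forall>i\<le>n. fv.subspace (W i)"
  proof (intro allI impI)
    fix i assume i: "i \<le> n"
    have ls: "lin_subspace (S // E) (V i)" using Veq i by (simp add: equivariant_subspace_def)
    show "fv.subspace (W i)"
      unfolding fv.subspace_def
    proof (intro conjI ballI allI)
      show "0 \<in> W i" using ls by (simp add: W_def lin_subspace_def zero_fun_def)
    next
      fix x y assume "x \<in> W i" "y \<in> W i"
      then show "x + y \<in> W i" using ls by (simp add: W_def lin_subspace_def plus_fun_def)
    next
      fix c x assume "x \<in> W i"
      then show "fscale c x \<in> W i" using ls by (simp add: W_def lin_subspace_def fscale_def)
    qed
  qed
  have Winv: "\<forall>i\<le>n. \<forall>\<sigma>\<in>G. \<forall>w\<in>W i. (\<lambda>y. if y \<in> Y then w (\<sigma> y) else 0) \<in> W i"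
  proof (intro allI impI ballI)
    fix i \<sigma> w assume i: "i \<le> n" and s: "\<sigma> \<in> G" and w: "w \<in> W i"
    obtain g where g: "aut_on ar Rel A g" "g ` B = B" "\<sigma> = sig g" using s by (auto simp: G_def)
    define h where "h = inv_into A g"
    have h: "aut_on ar Rel A h" "h ` B = B" using aut_inv[OF g(1)] inv_stab[OF g(1) g(2) BA] by (auto simp: h_def)
    have wV: "w \<in> V i" and ws: "\<forall>c. c \<notin> Y \<longrightarrow> w c = 0" using w by (auto simp: W_def)
    have la: "lin_act h w = (\<lambda>y. if y \<in> Y then w (\<sigma> y) else 0)"
    proof
      fix c'
      show "lin_act h w c' = (if c' \<in> Y then w (\<sigma> c') else 0)"
      proof (cases "c' \<in> Y")
        case True
        have set_eq: "{c. w c \<noteq> 0 \<and> cls_img h c = c'} = (if w (cls_img g c') \<noteq> 0 then {cls_img g c'} else {})"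
        proof -
          have 1: "c = cls_img g c'" if "w c \<noteq> 0" "cls_img h c = c'" for c
          proof -
            have "c \<in> Y" using that ws by blast
            then have "cls_img g (cls_img h c) = c" using invY(2)[OF g(1)] by (simp add: h_def)
            then show ?thesis using that(2) by simp
          qed
          have 2: "cls_img h (cls_img g c') = c'" using invY(1)[OF g(1) True] by (simp add: h_def)
          show ?thesis
          proof (rule set_eqI)
            fix c
            show "c \<in> {c. w c \<noteq> 0 \<and> cls_img h c = c'} \<longleftrightarrow>
                  c \<in> (if w (cls_img g c') \<noteq> 0 then {cls_img g c'} else {})"
            proof
              assume "c \<in> {c. w c \<noteq> 0 \<and> cls_img h c = c'}"
              then have a: "w c \<noteq> 0" "cls_img h c = c'" by simp_all
              have "c = cls_img g c'" using 1[OF a] .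
              then show "c \<in> (if w (cls_img g c') \<noteq> 0 then {cls_img g c'} else {})" using a(1) by simp
            next
              assume a: "c \<in> (if w (cls_img g c') \<noteq> 0 then {cls_img g c'} else {})"
              then have "w (cls_img g c') \<noteq> 0" "c = cls_img g c'" by (simp_all split: if_splits)
              then show "c \<in> {c. w c \<noteq> 0 \<and> cls_img h c = c'}" using 2 by simp
            qed
          qed
        qed
        show ?thesis using True g(3) by (simp add: lin_act_def set_eq sig_def)
      next
        case False
        have "{c. w c \<noteq> 0 \<and> cls_img h c = c'} = {}"
        proof -
          have "cls_img h c \<noteq> c'" if "w c \<noteq> 0" for c
          proof -
            have "c \<in> Y" using that ws by blast
            then show ?thesis using mapY[OF h] False by blast
          qed
          then show ?thesis by blast
        qed
        then show ?thesis using False unfolding lin_act_def by (simp only: sum.empty if_False)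
      qed
    qed
    have "lin_act h w \<in> V i" using Veq i h(1) wV by (simp add: equivariant_subspace_def)
    then show "(\<lambda>y. if y \<in> Y then w (\<sigma> y) else 0) \<in> W i" using la by (simp add: W_def)
  qed
  have Wchain: "\<forall>i<n. W i \<subset> W (Suc i)"
  proof (intro allI impI)
    fix i assume i: "i < n"
    have "W i \<subseteq> W (Suc i)" using chain i by (auto simp: W_def)
    moreover have "v i \<in> W (Suc i)"
    proof -
      have "\<forall>c. c \<notin> Y \<longrightarrow> v i c = 0"
      proof (intro allI impI)
        fix c assume c: "c \<notin> Y"
        show "v i c = 0"
        proof (rule ccontr)
          assume "v i c \<noteq> 0"
          then obtain ys where "ys \<in> S" "set ys \<subseteq> B" "c = E `` {ys}" using vsupp i by blast
          then show False using YI c by blast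
        qed
      qed
      then show ?thesis using vwit i by (simp add: W_def)
    qed
    moreover have "v i \<notin> W i" using vwit i by (simp add: W_def)
    ultimately show "W i \<subset> W (Suc i)" by blast
  qed
  show ?thesis
    by (rule core_chain[OF Yfin Gfin Gne Gbij Gext Gcomp Ginv Zsub ZN Zcov Wsp Wsupp Winv Wchain])
qed

theorem mainTheorem3:
  fixes A :: "'a set" and ar :: "'s \<Rightarrow> nat" and Rel :: "'s \<Rightarrow> 'a list set"
  assumes "rel_struct A ar Rel"
    and "countable A" and "infinite A"
    and "homogeneous A ar Rel"
    and "oligomorphic A ar Rel"
    and "oligomorphic_approximation A ar Rel"
  shows "finite_length_property A ar Rel TYPE('f::field_char_0)"
  unfolding finite_length_property_def
proof (intro allI impI)
  fix d S E assume of: "orbit_finite_set A ar Rel d S E"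
  have hom: "homogeneous A ar Rel" by fact
  have Ssub: "S \<subseteq> tuples A d" using of by (simp add: orbit_finite_set_def)
  have "Suc (2 * d) \<ge> 1" by simp
  from assms(6)[unfolded oligomorphic_approximation_def, rule_format, OF this]
  obtain \<B> where B1: "\<forall>B\<in>\<B>. finite B \<and> B \<subseteq> A"
      and B2: "\<forall>B0. finite B0 \<and> B0 \<subseteq> A \<longrightarrow> (\<exists>B\<in>\<B>. B0 \<subseteq> B)"
      and B3': "\<exists>N::nat. \<forall>B\<in>\<B>. card (orbits ar Rel B (Suc (2 * d))) \<le> N"
    by (elim exE conjE) (rule that, assumption, assumption, rule exI, assumption)
  from B3' obtain N where B3: "\<forall>B\<in>\<B>. card (orbits ar Rel B (Suc (2 * d))) \<le> N" ..
  obtain a0 where a0: "a0 \<in> A" using assms(3) by (metis finite.emptyI ex_in_conv)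
  obtain r where r: "\<forall>c\<in>S // E. r c \<in> S \<and> c = E `` {r c}"
  proof -
    have "\<forall>c\<in>S // E. \<exists>ys. ys \<in> S \<and> c = E `` {ys}" by (auto elim!: quotientE)
    then show ?thesis using that by metis
  qed
  show "finite_length A ar Rel (S // E) TYPE('f)"
    unfolding finite_length_def
  proof (intro exI[of _ N] allI impI)
    fix n and V :: "nat \<Rightarrow> ('a list set \<Rightarrow> 'f) set"
    assume H: "(\<forall>i\<le>n. equivariant_subspace A ar Rel (S // E) (V i)) \<and> (\<forall>i<n. V i \<subset> V (Suc i))"
    then have Veq: "\<forall>i\<le>n. equivariant_subspace A ar Rel (S // E) (V i)"
      and chain: "\<forall>i<n. V i \<subset> V (Suc i)" by auto
    have "\<forall>i. \<exists>w. i < n \<longrightarrow> w \<in> V (Suc i) \<and> w \<notin> V i" using chain by blast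
    then obtain v where vwit: "\<forall>i<n. v i \<in> V (Suc i) \<and> v i \<notin> V i" by metis
    have vLin: "v i \<in> Lin (S // E)" if "i < n" for i
    proof -
      have "equivariant_subspace A ar Rel (S // E) (V (Suc i))" using Veq that by simp
      then have "V (Suc i) \<subseteq> Lin (S // E)" by (simp add: equivariant_subspace_def lin_subspace_def)
      then show ?thesis using vwit that by blast
    qed
    define C0 where "C0 = (\<Union>i<n. {c. v i c \<noteq> 0})"
    have C0fin: "finite C0" unfolding C0_def using vLin by (auto simp: Lin_def)
    have C0X: "C0 \<subseteq> S // E" unfolding C0_def using vLin by (auto simp: Lin_def)
    define B0 where "B0 = insert a0 (\<Union>c\<in>C0. set (r c))"
    have B0fin: "finite B0" using C0fin by (simp add: B0_def)
    have B0A: "B0 \<subseteq> A"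
    proof -
      have "set (r c) \<subseteq> A" if "c \<in> C0" for c
      proof -
        have "r c \<in> S" using r C0X that by blast
        then show ?thesis using Ssub by (auto simp: tuples_def)
      qed
      then show ?thesis using a0 by (auto simp: B0_def)
    qed
    obtain B where B: "B \<in> \<B>" "B0 \<subseteq> B" using B2 B0fin B0A by blast
    have Bfin: "finite B" and BA: "B \<subseteq> A" using B1 B by auto
    have a0B: "a0 \<in> B" using B(2) by (simp add: B0_def)
    have orbN: "card (orbits ar Rel B (Suc (2 * d))) \<le> N" using B3 B by blast
    have vsupp: "\<forall>i<n. \<forall>c. v i c \<noteq> 0 \<longrightarrow> (\<exists>ys\<in>S. set ys \<subseteq> B \<and> c = E `` {ys})"
    proof (intro allI impI)
      fix i c assume i: "i < n" and c: "v i c \<noteq> 0"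
      have cC: "c \<in> C0" using i c by (auto simp: C0_def)
      then have "c \<in> S // E" using C0X by blast
      then have "r c \<in> S" "c = E `` {r c}" using r by auto
      moreover have "set (r c) \<subseteq> B" using cC B(2) by (auto simp: B0_def)
      ultimately show "\<exists>ys\<in>S. set ys \<subseteq> B \<and> c = E `` {ys}" by blast
    qed
    show "n \<le> N"
      by (rule main_bound[OF hom of Bfin BA a0B orbN Veq vwit vsupp chain])
  qed
qed

end
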